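(* Let $F:\mathcal A\to\mathcal B$ be a triangle functor between triangulated categories. Then $F$ is faithful if and only if $F$ reflects splitting epimorphisms, i.e. whenever $v$ is a morphism of $\mathcal A$ such that $F(v)$ is a splitting epimorphism in $\mathcal B$, then $v$ is a splitting epimorphism in $\mathcal A$.
   Context: A triangle functor is a pair $(F,\xi)$ with $F$ additive and $\xi:F[1]\to[1]F$ a natural isomorphism such that $F$ sends distinguished triangles $(X,Y,Z,u,v,w)$ to distinguished triangles $(F(X),F(Y),F(Z),F(u),F(v),\xi_XF(w))$. *)

theory Defs
  imports Main
begin

text \<open>Composition convention: Cmp C g f is g after f.\<close>

record ('o, 'm) tri_cat =
  Ob   :: "'o set"
  Ar   :: "'m set"
  Dm   :: "'m \<Rightarrow> 'o"
  Cd   :: "'m \<Rightarrow> 'o"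
  Idt  :: "'o \<Rightarrow> 'm"
  Cmp  :: "'m \<Rightarrow> 'm \<Rightarrow> 'm"
  Ad   :: "'m \<Rightarrow> 'm \<Rightarrow> 'm"
  Ng   :: "'m \<Rightarrow> 'm"
  Zr   :: "'o \<Rightarrow> 'o \<Rightarrow> 'm"
  ShO  :: "'o \<Rightarrow> 'o"
  ShA  :: "'m \<Rightarrow> 'm"
  Dist :: "('o \<times> 'o \<times> 'o \<times> 'm \<times> 'm \<times> 'm) set"

definition hom :: "('o,'m) tri_cat \<Rightarrow> 'o \<Rightarrow> 'o \<Rightarrow> 'm set" where
  "hom C X Y = {f \<in> Ar C. Dm C f = X \<and> Cd C f = Y}"

definition category :: "('o,'m) tri_cat \<Rightarrow> bool" where
  "category C \<longleftrightarrow>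
     (\<forall>f\<in>Ar C. Dm C f \<in> Ob C \<and> Cd C f \<in> Ob C) \<and>
     (\<forall>X\<in>Ob C. Idt C X \<in> hom C X X) \<and>
     (\<forall>X Y Z f g. f \<in> hom C X Y \<longrightarrow> g \<in> hom C Y Z \<longrightarrow> Cmp C g f \<in> hom C X Z) \<and>
     (\<forall>X Y f. f \<in> hom C X Y \<longrightarrow> Cmp C f (Idt C X) = f \<and> Cmp C (Idt C Y) f = f) \<and>
     (\<forall>W X Y Z f g h. f \<in> hom C W X \<longrightarrow> g \<in> hom C X Y \<longrightarrow> h \<in> hom C Y Z \<longrightarrow>
        Cmp C h (Cmp C g f) = Cmp C (Cmp C h g) f)"

definition iso :: "('o,'m) tri_cat \<Rightarrow> 'm \<Rightarrow> bool" where
  "iso C f \<longleftrightarrow> f \<in> Ar C \<and>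
     (\<exists>g\<in>hom C (Cd C f) (Dm C f). Cmp C g f = Idt C (Dm C f) \<and> Cmp C f g = Idt C (Cd C f))"

definition split_epi :: "('o,'m) tri_cat \<Rightarrow> 'm \<Rightarrow> bool" where
  "split_epi C v \<longleftrightarrow> v \<in> Ar C \<and>
     (\<exists>s\<in>hom C (Cd C v) (Dm C v). Cmp C v s = Idt C (Cd C v))"

definition preadditive :: "('o,'m) tri_cat \<Rightarrow> bool" where
  "preadditive C \<longleftrightarrow> category C \<and>
     (\<forall>X\<in>Ob C. \<forall>Y\<in>Ob C.
        Zr C X Y \<in> hom C X Y \<and>
        (\<forall>f\<in>hom C X Y. \<forall>g\<in>hom C X Y. Ad C f g \<in> hom C X Y) \<and>
        (\<forall>f\<in>hom C X Y. Ng C f \<in> hom C X Y) \<and>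
        (\<forall>f\<in>hom C X Y. \<forall>g\<in>hom C X Y. \<forall>h\<in>hom C X Y.
            Ad C (Ad C f g) h = Ad C f (Ad C g h)) \<and>
        (\<forall>f\<in>hom C X Y. \<forall>g\<in>hom C X Y. Ad C f g = Ad C g f) \<and>
        (\<forall>f\<in>hom C X Y. Ad C f (Zr C X Y) = f) \<and>
        (\<forall>f\<in>hom C X Y. Ad C f (Ng C f) = Zr C X Y)) \<and>
     (\<forall>X Y Z f g g'. f \<in> hom C X Y \<longrightarrow> g \<in> hom C Y Z \<longrightarrow> g' \<in> hom C Y Z \<longrightarrow>
        Cmp C (Ad C g g') f = Ad C (Cmp C g f) (Cmp C g' f)) \<and>
     (\<forall>X Y Z f f' g. f \<in> hom C X Y \<longrightarrow> f' \<in> hom C X Y \<longrightarrow> g \<in> hom C Y Z \<longrightarrow>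
        Cmp C g (Ad C f f') = Ad C (Cmp C g f) (Cmp C g f'))"

definition zero_object :: "('o,'m) tri_cat \<Rightarrow> 'o \<Rightarrow> bool" where
  "zero_object C Q \<longleftrightarrow> Q \<in> Ob C \<and>
     (\<forall>X\<in>Ob C. hom C Q X = {Zr C Q X} \<and> hom C X Q = {Zr C X Q})"

definition additive :: "('o,'m) tri_cat \<Rightarrow> bool" where
  "additive C \<longleftrightarrow> preadditive C \<and> (\<exists>Q. zero_object C Q) \<and>
     (\<forall>X\<in>Ob C. \<forall>Y\<in>Ob C. \<exists>P i1 i2 p1 p2.
        P \<in> Ob C \<and> i1 \<in> hom C X P \<and> i2 \<in> hom C Y P \<and> p1 \<in> hom C P X \<and> p2 \<in> hom C P Y \<and>
        Cmp C p1 i1 = Idt C X \<and> Cmp C p2 i2 = Idt C Y \<and>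
        Cmp C p1 i2 = Zr C Y X \<and> Cmp C p2 i1 = Zr C X Y \<and>
        Ad C (Cmp C i1 p1) (Cmp C i2 p2) = Idt C P)"

definition cat_functor :: "('o,'m) tri_cat \<Rightarrow> ('p,'n) tri_cat \<Rightarrow> ('o \<Rightarrow> 'p) \<Rightarrow> ('m \<Rightarrow> 'n) \<Rightarrow> bool" where
  "cat_functor C D Fo Fa \<longleftrightarrow>
     (\<forall>X\<in>Ob C. Fo X \<in> Ob D) \<and>
     (\<forall>X Y f. f \<in> hom C X Y \<longrightarrow> Fa f \<in> hom D (Fo X) (Fo Y)) \<and>
     (\<forall>X\<in>Ob C. Fa (Idt C X) = Idt D (Fo X)) \<and>
     (\<forall>X Y Z f g. f \<in> hom C X Y \<longrightarrow> g \<in> hom C Y Z \<longrightarrow> Fa (Cmp C g f) = Cmp D (Fa g) (Fa f))"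

definition additive_functor :: "('o,'m) tri_cat \<Rightarrow> ('p,'n) tri_cat \<Rightarrow> ('o \<Rightarrow> 'p) \<Rightarrow> ('m \<Rightarrow> 'n) \<Rightarrow> bool" where
  "additive_functor C D Fo Fa \<longleftrightarrow> cat_functor C D Fo Fa \<and>
     (\<forall>X Y f g. f \<in> hom C X Y \<longrightarrow> g \<in> hom C X Y \<longrightarrow> Fa (Ad C f g) = Ad D (Fa f) (Fa g))"

definition faithful :: "('o,'m) tri_cat \<Rightarrow> ('m \<Rightarrow> 'n) \<Rightarrow> bool" where
  "faithful C Fa \<longleftrightarrow>
     (\<forall>X\<in>Ob C. \<forall>Y\<in>Ob C. \<forall>f\<in>hom C X Y. \<forall>g\<in>hom C X Y. Fa f = Fa g \<longrightarrow> f = g)"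

definition full :: "('o,'m) tri_cat \<Rightarrow> ('p,'n) tri_cat \<Rightarrow> ('o \<Rightarrow> 'p) \<Rightarrow> ('m \<Rightarrow> 'n) \<Rightarrow> bool" where
  "full C D Fo Fa \<longleftrightarrow>
     (\<forall>X\<in>Ob C. \<forall>Y\<in>Ob C. \<forall>h\<in>hom D (Fo X) (Fo Y). \<exists>f\<in>hom C X Y. Fa f = h)"

definition ess_surj :: "('o,'m) tri_cat \<Rightarrow> ('p,'n) tri_cat \<Rightarrow> ('o \<Rightarrow> 'p) \<Rightarrow> bool" where
  "ess_surj C D Fo \<longleftrightarrow> (\<forall>Y\<in>Ob D. \<exists>X\<in>Ob C. \<exists>h\<in>hom D (Fo X) Y. iso D h)"

definition triangle :: "('o,'m) tri_cat \<Rightarrow> ('o \<times> 'o \<times> 'o \<times> 'm \<times> 'm \<times> 'm) \<Rightarrow> bool" where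
  "triangle C t = (case t of (X,Y,Z,u,v,w) \<Rightarrow>
     X \<in> Ob C \<and> Y \<in> Ob C \<and> Z \<in> Ob C \<and>
     u \<in> hom C X Y \<and> v \<in> hom C Y Z \<and> w \<in> hom C Z (ShO C X))"

definition tri_morphism :: "('o,'m) tri_cat \<Rightarrow> ('o \<times> 'o \<times> 'o \<times> 'm \<times> 'm \<times> 'm)
    \<Rightarrow> ('o \<times> 'o \<times> 'o \<times> 'm \<times> 'm \<times> 'm) \<Rightarrow> 'm \<Rightarrow> 'm \<Rightarrow> 'm \<Rightarrow> bool" where
  "tri_morphism C t t' a b c = (case t of (X,Y,Z,u,v,w) \<Rightarrow> case t' of (X',Y',Z',u',v',w') \<Rightarrow>
     a \<in> hom C X X' \<and> b \<in> hom C Y Y' \<and> c \<in> hom C Z Z' \<and>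
     Cmp C b u = Cmp C u' a \<and> Cmp C c v = Cmp C v' b \<and> Cmp C (ShA C a) w = Cmp C w' c)"

definition triangulated :: "('o,'m) tri_cat \<Rightarrow> bool" where
  "triangulated C \<longleftrightarrow>
     additive C \<and>
     additive_functor C C (ShO C) (ShA C) \<and>
     full C C (ShO C) (ShA C) \<and> faithful C (ShA C) \<and> ess_surj C C (ShO C) \<and>
     (\<forall>t\<in>Dist C. triangle C t) \<and>
     \<comment> \<open>TR1: closure under isomorphism of triangles\<close>
     (\<forall>t t' a b c. t \<in> Dist C \<longrightarrow> triangle C t' \<longrightarrow> tri_morphism C t t' a b c \<longrightarrow>
        iso C a \<longrightarrow> iso C b \<longrightarrow> iso C c \<longrightarrow> t' \<in> Dist C) \<and>
     \<comment> \<open>TR1: X -> X -> 0 -> X[1]\<close>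
     (\<forall>X\<in>Ob C. \<forall>Q. zero_object C Q \<longrightarrow>
        (X, X, Q, Idt C X, Zr C X Q, Zr C Q (ShO C X)) \<in> Dist C) \<and>
     \<comment> \<open>TR1: every morphism extends to a distinguished triangle\<close>
     (\<forall>X Y u. X \<in> Ob C \<longrightarrow> Y \<in> Ob C \<longrightarrow> u \<in> hom C X Y \<longrightarrow>
        (\<exists>Z v w. (X, Y, Z, u, v, w) \<in> Dist C)) \<and>
     \<comment> \<open>TR2: rotation\<close>
     (\<forall>X Y Z u v w. triangle C (X, Y, Z, u, v, w) \<longrightarrow>
        ((X, Y, Z, u, v, w) \<in> Dist C \<longleftrightarrow> (Y, Z, ShO C X, v, w, Ng C (ShA C u)) \<in> Dist C)) \<and>
     \<comment> \<open>TR3: completion of morphisms of triangles\<close>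
     (\<forall>X Y Z u v w X' Y' Z' u' v' w' a b.
        (X, Y, Z, u, v, w) \<in> Dist C \<longrightarrow> (X', Y', Z', u', v', w') \<in> Dist C \<longrightarrow>
        a \<in> hom C X X' \<longrightarrow> b \<in> hom C Y Y' \<longrightarrow> Cmp C b u = Cmp C u' a \<longrightarrow>
        (\<exists>c. tri_morphism C (X, Y, Z, u, v, w) (X', Y', Z', u', v', w') a b c)) \<and>
     \<comment> \<open>TR4: octahedral axiom\<close>
     (\<forall>X Y Z u v Z' j k X' l i Y' m n.
        (X, Y, Z', u, j, k) \<in> Dist C \<longrightarrow>
        (Y, Z, X', v, l, i) \<in> Dist C \<longrightarrow>
        (X, Z, Y', Cmp C v u, m, n) \<in> Dist C \<longrightarrow>
        (\<exists>f g. (Z', Y', X', f, g, Cmp C (ShA C j) i) \<in> Dist C \<and>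
               Cmp C f j = Cmp C m v \<and> Cmp C n f = k \<and> Cmp C g m = l \<and>
               Cmp C i g = Cmp C (ShA C u) n))"

definition triangle_functor :: "('o,'m) tri_cat \<Rightarrow> ('p,'n) tri_cat \<Rightarrow>
    ('o \<Rightarrow> 'p) \<Rightarrow> ('m \<Rightarrow> 'n) \<Rightarrow> ('o \<Rightarrow> 'n) \<Rightarrow> bool" where
  "triangle_functor A B Fo Fa \<xi> \<longleftrightarrow>
     additive_functor A B Fo Fa \<and>
     (\<forall>X\<in>Ob A. \<xi> X \<in> hom B (Fo (ShO A X)) (ShO B (Fo X)) \<and> iso B (\<xi> X)) \<and>
     (\<forall>X Y f. f \<in> hom A X Y \<longrightarrow>
        Cmp B (\<xi> Y) (Fa (ShA A f)) = Cmp B (ShA B (Fa f)) (\<xi> X)) \<and>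
     (\<forall>X Y Z u v w. (X, Y, Z, u, v, w) \<in> Dist A \<longrightarrow>
        (Fo X, Fo Y, Fo Z, Fa u, Fa v, Cmp B (\<xi> X) (Fa w)) \<in> Dist B)"

end

theory Submission imports Defs begin
lemma homD: "f \<in> hom C X Y \<Longrightarrow> f \<in> Ar C \<and> Dm C f = X \<and> Cd C f = Y"
  by (simp add: hom_def)

lemma cat_obs: "category C \<Longrightarrow> f \<in> hom C X Y \<Longrightarrow> X \<in> Ob C \<and> Y \<in> Ob C"
  unfolding category_def hom_def by auto
lemma cat_comp: "category C \<Longrightarrow> f \<in> hom C X Y \<Longrightarrow> g \<in> hom C Y Z \<Longrightarrow> Cmp C g f \<in> hom C X Z"
  unfolding category_def by blast
lemma cat_id: "category C \<Longrightarrow> X \<in> Ob C \<Longrightarrow> Idt C X \<in> hom C X X"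
  unfolding category_def by blast
lemma cat_idr: "category C \<Longrightarrow> f \<in> hom C X Y \<Longrightarrow> Cmp C f (Idt C X) = f"
  unfolding category_def by blast
lemma cat_idl: "category C \<Longrightarrow> f \<in> hom C X Y \<Longrightarrow> Cmp C (Idt C Y) f = f"
  unfolding category_def by blast
lemma cat_assoc: "category C \<Longrightarrow> f \<in> hom C W X \<Longrightarrow> g \<in> hom C X Y \<Longrightarrow> h \<in> hom C Y Z \<Longrightarrow>
        Cmp C h (Cmp C g f) = Cmp C (Cmp C h g) f"
  unfolding category_def by blast

lemma pa_cat: "preadditive C \<Longrightarrow> category C" unfolding preadditive_def by blast
lemma pa_zero: "preadditive C \<Longrightarrow> X \<in> Ob C \<Longrightarrow> Y \<in> Ob C \<Longrightarrow> Zr C X Y \<in> hom C X Y"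
  unfolding preadditive_def by blast
lemma pa_grp: "preadditive C \<Longrightarrow> X \<in> Ob C \<Longrightarrow> Y \<in> Ob C \<Longrightarrow>
        Zr C X Y \<in> hom C X Y \<and>
        (\<forall>f\<in>hom C X Y. \<forall>g\<in>hom C X Y. Ad C f g \<in> hom C X Y) \<and>
        (\<forall>f\<in>hom C X Y. Ng C f \<in> hom C X Y) \<and>
        (\<forall>f\<in>hom C X Y. \<forall>g\<in>hom C X Y. \<forall>h\<in>hom C X Y.
            Ad C (Ad C f g) h = Ad C f (Ad C g h)) \<and>
        (\<forall>f\<in>hom C X Y. \<forall>g\<in>hom C X Y. Ad C f g = Ad C g f) \<and>
        (\<forall>f\<in>hom C X Y. Ad C f (Zr C X Y) = f) \<and>
        (\<forall>f\<in>hom C X Y. Ad C f (Ng C f) = Zr C X Y)"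
proof -
  assume C: "preadditive C" and X: "X \<in> Ob C" and Y: "Y \<in> Ob C"
  have "\<forall>X\<in>Ob C. \<forall>Y\<in>Ob C. Zr C X Y \<in> hom C X Y \<and>
        (\<forall>f\<in>hom C X Y. \<forall>g\<in>hom C X Y. Ad C f g \<in> hom C X Y) \<and>
        (\<forall>f\<in>hom C X Y. Ng C f \<in> hom C X Y) \<and>
        (\<forall>f\<in>hom C X Y. \<forall>g\<in>hom C X Y. \<forall>h\<in>hom C X Y.
            Ad C (Ad C f g) h = Ad C f (Ad C g h)) \<and>
        (\<forall>f\<in>hom C X Y. \<forall>g\<in>hom C X Y. Ad C f g = Ad C g f) \<and>
        (\<forall>f\<in>hom C X Y. Ad C f (Zr C X Y) = f) \<and>
        (\<forall>f\<in>hom C X Y. Ad C f (Ng C f) = Zr C X Y)"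
    using C unfolding preadditive_def by (rule conjunct1[OF conjunct2])
  thus ?thesis by (rule bspec[OF bspec[OF _ X] Y])
qed

lemma pa_grp': "preadditive C \<Longrightarrow> f \<in> hom C X Y \<Longrightarrow>
        (\<forall>f\<in>hom C X Y. \<forall>g\<in>hom C X Y. Ad C f g \<in> hom C X Y) \<and>
        (\<forall>f\<in>hom C X Y. Ng C f \<in> hom C X Y) \<and>
        (\<forall>f\<in>hom C X Y. \<forall>g\<in>hom C X Y. \<forall>h\<in>hom C X Y.
            Ad C (Ad C f g) h = Ad C f (Ad C g h)) \<and>
        (\<forall>f\<in>hom C X Y. \<forall>g\<in>hom C X Y. Ad C f g = Ad C g f) \<and>
        (\<forall>f\<in>hom C X Y. Ad C f (Zr C X Y) = f) \<and>
        (\<forall>f\<in>hom C X Y. Ad C f (Ng C f) = Zr C X Y)"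
proof -
  assume C: "preadditive C" and f: "f \<in> hom C X Y"
  have "X \<in> Ob C" "Y \<in> Ob C" using cat_obs[OF pa_cat[OF C] f] by auto
  from pa_grp[OF C this] show ?thesis by (elim conjE) (intro conjI)
qed

lemma pa_add: assumes C: "preadditive C" and f: "f \<in> hom C X Y" and g: "g \<in> hom C X Y"
  shows "Ad C f g \<in> hom C X Y"
proof -
  have H: "\<forall>f\<in>hom C X Y. \<forall>g\<in>hom C X Y. Ad C f g \<in> hom C X Y" using pa_grp'[OF C f] by (elim conjE)
  show ?thesis using  H f g by blast
qed
lemma pa_neg: assumes C: "preadditive C" and f: "f \<in> hom C X Y" shows "Ng C f \<in> hom C X Y"
proof -
  have H: "\<forall>f\<in>hom C X Y. Ng C f \<in> hom C X Y" using pa_grp'[OF C f] by (elim conjE)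
  show ?thesis using  H f by blast
qed
lemma pa_assoc: assumes C: "preadditive C" and f: "f \<in> hom C X Y" and g: "g \<in> hom C X Y" and h: "h \<in> hom C X Y"
  shows "Ad C (Ad C f g) h = Ad C f (Ad C g h)"
proof -
  have H: "\<forall>f\<in>hom C X Y. \<forall>g\<in>hom C X Y. \<forall>h\<in>hom C X Y. Ad C (Ad C f g) h = Ad C f (Ad C g h)" using pa_grp'[OF C f] by (elim conjE)
  show ?thesis using  H f g h by blast
qed
lemma pa_comm: assumes C: "preadditive C" and f: "f \<in> hom C X Y" and g: "g \<in> hom C X Y"
  shows "Ad C f g = Ad C g f"
proof -
  have "\<forall>f\<in>hom C X Y. \<forall>g\<in>hom C X Y. Ad C f g = Ad C g f" using pa_grp'[OF C f] by (elim conjE)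
  thus ?thesis using f g by simp
qed
lemma pa_rzero: assumes C: "preadditive C" and f: "f \<in> hom C X Y" shows "Ad C f (Zr C X Y) = f"
proof -
  have H: "\<forall>f\<in>hom C X Y. Ad C f (Zr C X Y) = f" using pa_grp'[OF C f] by (elim conjE)
  show ?thesis using  H f by blast
qed
lemma pa_rinv: assumes C: "preadditive C" and f: "f \<in> hom C X Y" shows "Ad C f (Ng C f) = Zr C X Y"
proof -
  have H: "\<forall>f\<in>hom C X Y. Ad C f (Ng C f) = Zr C X Y" using pa_grp'[OF C f] by (elim conjE)
  show ?thesis using  H f by blast
qed

lemma pa_dist: "preadditive C \<Longrightarrow>
     (\<forall>X Y Z f g g'. f \<in> hom C X Y \<longrightarrow> g \<in> hom C Y Z \<longrightarrow> g' \<in> hom C Y Z \<longrightarrow>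
        Cmp C (Ad C g g') f = Ad C (Cmp C g f) (Cmp C g' f)) \<and>
     (\<forall>X Y Z f f' g. f \<in> hom C X Y \<longrightarrow> f' \<in> hom C X Y \<longrightarrow> g \<in> hom C Y Z \<longrightarrow>
        Cmp C g (Ad C f f') = Ad C (Cmp C g f) (Cmp C g f'))"
  unfolding preadditive_def by (elim conjE) (intro conjI)

lemma pa_distl: assumes C: "preadditive C" and f: "f \<in> hom C X Y" and g: "g \<in> hom C Y Z" and g': "g' \<in> hom C Y Z"
  shows "Cmp C (Ad C g g') f = Ad C (Cmp C g f) (Cmp C g' f)"
  using conjunct1[OF pa_dist[OF C]] f g g' by blast
lemma pa_distr: assumes C: "preadditive C" and f: "f \<in> hom C X Y" and f': "f' \<in> hom C X Y" and g: "g \<in> hom C Y Z"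
  shows "Cmp C g (Ad C f f') = Ad C (Cmp C g f) (Cmp C g f')"
  using conjunct2[OF pa_dist[OF C]] f f' g by blast

lemma g_idem:
  assumes C: "preadditive C" and a: "a \<in> hom C X Y" and e: "Ad C a a = a"
  shows "a = Zr C X Y"
proof -
  have n: "Ng C a \<in> hom C X Y" using pa_neg[OF C a] .
  have "Ad C (Ad C a a) (Ng C a) = Ad C a (Ad C a (Ng C a))" using pa_assoc[OF C a a n] .
  also have "\<dots> = a" using pa_rinv[OF C a] pa_rzero[OF C a] by simp
  finally show ?thesis using e pa_rinv[OF C a] by simp
qed

lemma g_lzero:
  assumes C: "preadditive C" and a: "a \<in> hom C X Y" shows "Ad C (Zr C X Y) a = a"
proof -
  have "X \<in> Ob C" "Y \<in> Ob C" using cat_obs[OF pa_cat[OF C] a] by auto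
  hence z: "Zr C X Y \<in> hom C X Y" using pa_zero[OF C] by blast
  show ?thesis using pa_comm[OF C z a] pa_rzero[OF C a] by simp
qed

lemma g_inv_unique:
  assumes C: "preadditive C" and a: "a \<in> hom C X Y" and b: "b \<in> hom C X Y"
    and e: "Ad C a b = Zr C X Y"
  shows "b = Ng C a"
proof -
  have n: "Ng C a \<in> hom C X Y" using pa_neg[OF C a] .
  have "b = Ad C b (Ad C a (Ng C a))" using pa_rinv[OF C a] pa_rzero[OF C b] by simp
  also have "\<dots> = Ad C (Ad C b a) (Ng C a)" using pa_assoc[OF C b a n] by simp
  also have "\<dots> = Ng C a" using e pa_comm[OF C a b] g_lzero[OF C n] by simp
  finally show ?thesis .
qed

lemma neg_neg:
  assumes C: "preadditive C" and a: "a \<in> hom C X Y" shows "Ng C (Ng C a) = a"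
proof -
  have n: "Ng C a \<in> hom C X Y" using pa_neg[OF C a] .
  have "Ad C (Ng C a) a = Zr C X Y" using pa_comm[OF C a n] pa_rinv[OF C a] by simp
  thus ?thesis using g_inv_unique[OF C n a] by simp
qed

lemma neg_inj:
  assumes C: "preadditive C" and a: "a \<in> hom C X Y" and b: "b \<in> hom C X Y" and e: "Ng C a = Ng C b"
  shows "a = b"
proof -
  have "a = Ng C (Ng C a)" using neg_neg[OF C a] by simp
  also have "\<dots> = Ng C (Ng C b)" using e by simp
  also have "\<dots> = b" using neg_neg[OF C b] .
  finally show ?thesis .
qed

lemma neg_zero:
  assumes C: "preadditive C" and X: "X \<in> Ob C" and Y: "Y \<in> Ob C" shows "Ng C (Zr C X Y) = Zr C X Y"
proof -
  have z: "Zr C X Y \<in> hom C X Y" using pa_zero[OF C X Y] .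
  show ?thesis using g_inv_unique[OF C z z pa_rzero[OF C z]] by simp
qed

lemma zero_comp:
  assumes C: "preadditive C" and f: "f \<in> hom C X Y" and Z: "Z \<in> Ob C"
  shows "Cmp C (Zr C Y Z) f = Zr C X Z"
proof -
  have cat: "category C" using pa_cat[OF C] .
  have Y: "Y \<in> Ob C" using cat_obs[OF cat f] by blast
  have z: "Zr C Y Z \<in> hom C Y Z" using pa_zero[OF C Y Z] .
  have "Cmp C (Zr C Y Z) f = Cmp C (Ad C (Zr C Y Z) (Zr C Y Z)) f" using pa_rzero[OF C z] by simp
  also have "\<dots> = Ad C (Cmp C (Zr C Y Z) f) (Cmp C (Zr C Y Z) f)" using pa_distl[OF C f z z] .
  finally show ?thesis using g_idem[OF C cat_comp[OF cat f z]] by simp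
qed

lemma comp_zero:
  assumes C: "preadditive C" and g: "g \<in> hom C Y Z" and X: "X \<in> Ob C"
  shows "Cmp C g (Zr C X Y) = Zr C X Z"
proof -
  have cat: "category C" using pa_cat[OF C] .
  have Y: "Y \<in> Ob C" using cat_obs[OF cat g] by blast
  have z: "Zr C X Y \<in> hom C X Y" using pa_zero[OF C X Y] .
  have "Cmp C g (Zr C X Y) = Cmp C g (Ad C (Zr C X Y) (Zr C X Y))" using pa_rzero[OF C z] by simp
  also have "\<dots> = Ad C (Cmp C g (Zr C X Y)) (Cmp C g (Zr C X Y))" using pa_distr[OF C z z g] .
  finally show ?thesis using g_idem[OF C cat_comp[OF cat z g]] by simp
qed

lemma neg_comp:
  assumes C: "preadditive C" and f: "f \<in> hom C X Y" and g: "g \<in> hom C Y Z"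
  shows "Cmp C (Ng C g) f = Ng C (Cmp C g f)"
proof -
  have cat: "category C" using pa_cat[OF C] .
  have n: "Ng C g \<in> hom C Y Z" using pa_neg[OF C g] .
  have Z: "Z \<in> Ob C" using cat_obs[OF cat g] by blast
  have "Ad C (Cmp C g f) (Cmp C (Ng C g) f) = Cmp C (Ad C g (Ng C g)) f" using pa_distl[OF C f g n] by simp
  also have "\<dots> = Zr C X Z" using pa_rinv[OF C g] zero_comp[OF C f Z] by simp
  finally show ?thesis using g_inv_unique[OF C cat_comp[OF cat f g] cat_comp[OF cat f n]] by simp
qed

lemma F_zero:
  assumes C: "preadditive C" and D: "preadditive D" and F: "additive_functor C D Fo Fa"
    and X: "X \<in> Ob C" and Y: "Y \<in> Ob C"
  shows "Fa (Zr C X Y) = Zr D (Fo X) (Fo Y)"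
proof -
  have z: "Zr C X Y \<in> hom C X Y" using pa_zero[OF C X Y] .
  have fz: "Fa (Zr C X Y) \<in> hom D (Fo X) (Fo Y)" using F z unfolding additive_functor_def cat_functor_def by blast
  have "Fa (Zr C X Y) = Fa (Ad C (Zr C X Y) (Zr C X Y))" using pa_rzero[OF C z] by simp
  also have "\<dots> = Ad D (Fa (Zr C X Y)) (Fa (Zr C X Y))" using F z unfolding additive_functor_def by blast
  finally show ?thesis using g_idem[OF D fz] by simp
qed

lemma F_hom: "additive_functor C D Fo Fa \<Longrightarrow> f \<in> hom C X Y \<Longrightarrow> Fa f \<in> hom D (Fo X) (Fo Y)"
  unfolding additive_functor_def cat_functor_def by blast
lemma F_add: "additive_functor C D Fo Fa \<Longrightarrow> f \<in> hom C X Y \<Longrightarrow> g \<in> hom C X Y \<Longrightarrow> Fa (Ad C f g) = Ad D (Fa f) (Fa g)"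
  unfolding additive_functor_def by blast
lemma F_comp: "additive_functor C D Fo Fa \<Longrightarrow> f \<in> hom C X Y \<Longrightarrow> g \<in> hom C Y Z \<Longrightarrow> Fa (Cmp C g f) = Cmp D (Fa g) (Fa f)"
  unfolding additive_functor_def cat_functor_def by blast
lemma F_id: "additive_functor C D Fo Fa \<Longrightarrow> X \<in> Ob C \<Longrightarrow> Fa (Idt C X) = Idt D (Fo X)"
  unfolding additive_functor_def cat_functor_def by blast
lemma F_ob: "additive_functor C D Fo Fa \<Longrightarrow> X \<in> Ob C \<Longrightarrow> Fo X \<in> Ob D"
  unfolding additive_functor_def cat_functor_def by blast

lemma F_neg:
  assumes C: "preadditive C" and D: "preadditive D" and F: "additive_functor C D Fo Fa"
    and f: "f \<in> hom C X Y"
  shows "Fa (Ng C f) = Ng D (Fa f)"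
proof -
  have XY: "X \<in> Ob C" "Y \<in> Ob C" using cat_obs[OF pa_cat[OF C] f] by auto
  have n: "Ng C f \<in> hom C X Y" using pa_neg[OF C f] .
  have "Ad D (Fa f) (Fa (Ng C f)) = Fa (Ad C f (Ng C f))" using F_add[OF F f n] by simp
  also have "\<dots> = Zr D (Fo X) (Fo Y)" using pa_rinv[OF C f] F_zero[OF C D F XY] by simp
  finally show ?thesis using g_inv_unique[OF D F_hom[OF F f] F_hom[OF F n]] by simp
qed

lemma faithful_of_zero:
  assumes C: "preadditive C" and D: "preadditive D" and F: "additive_functor C D Fo Fa"
    and Z: "\<And>X Y f. f \<in> hom C X Y \<Longrightarrow> Fa f = Zr D (Fo X) (Fo Y) \<Longrightarrow> f = Zr C X Y"
  shows "faithful C Fa"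
  unfolding faithful_def
proof (intro ballI impI)
  fix X Y f g assume X: "X \<in> Ob C" and Y: "Y \<in> Ob C" and f: "f \<in> hom C X Y" and g: "g \<in> hom C X Y"
    and e: "Fa f = Fa g"
  have n: "Ng C g \<in> hom C X Y" using pa_neg[OF C g] .
  have "Fa (Ad C f (Ng C g)) = Ad D (Fa g) (Ng D (Fa g))" using F_add[OF F f n] F_neg[OF C D F g] e by simp
  also have "\<dots> = Zr D (Fo X) (Fo Y)" using pa_rinv[OF D F_hom[OF F g]] .
  finally have "Ad C f (Ng C g) = Zr C X Y" using Z[OF pa_add[OF C f n]] by simp
  hence "Ad C (Ng C g) f = Zr C X Y" using pa_comm[OF C f n] by simp
  hence "f = Ng C (Ng C g)" using g_inv_unique[OF C n f] by simp
  thus "f = g" using neg_neg[OF C g] by simp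
qed

lemma tr_pa: "triangulated C \<Longrightarrow> preadditive C"
  unfolding triangulated_def additive_def by (elim conjE)
lemma tr_zobj: "triangulated C \<Longrightarrow> \<exists>Q. zero_object C Q"
  unfolding triangulated_def additive_def by (elim conjE)
lemma tr_shift: "triangulated C \<Longrightarrow> additive_functor C C (ShO C) (ShA C)"
  unfolding triangulated_def by (elim conjE)
lemma tr_full: "triangulated C \<Longrightarrow> full C C (ShO C) (ShA C)"
  unfolding triangulated_def by (elim conjE)
lemma tr_faith: "triangulated C \<Longrightarrow> faithful C (ShA C)"
  unfolding triangulated_def by (elim conjE)
lemma tr_tri: assumes C: "triangulated C" and d: "(X,Y,Z,u,v,w) \<in> Dist C" shows
   "X \<in> Ob C \<and> Y \<in> Ob C \<and> Z \<in> Ob C \<and> u \<in> hom C X Y \<and> v \<in> hom C Y Z \<and> w \<in> hom C Z (ShO C X)"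
proof -
  have "\<forall>t\<in>Dist C. triangle C t" using C unfolding triangulated_def by (elim conjE)
  hence "triangle C (X,Y,Z,u,v,w)" using d by blast
  thus ?thesis unfolding triangle_def by simp
qed
lemma tr_triv: assumes C: "triangulated C" and X: "X \<in> Ob C" and Q: "zero_object C Q" shows
        "(X, X, Q, Idt C X, Zr C X Q, Zr C Q (ShO C X)) \<in> Dist C"
proof -
  have "\<forall>X\<in>Ob C. \<forall>Q. zero_object C Q \<longrightarrow>
        (X, X, Q, Idt C X, Zr C X Q, Zr C Q (ShO C X)) \<in> Dist C" using C unfolding triangulated_def by (elim conjE)
  thus ?thesis using X Q by blast
qed
lemma tr_ext: assumes C: "triangulated C" and u: "u \<in> hom C X Y" shows "\<exists>Z v w. (X, Y, Z, u, v, w) \<in> Dist C"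
proof -
  have XY: "X \<in> Ob C" "Y \<in> Ob C" using cat_obs[OF pa_cat[OF tr_pa[OF C]] u] by auto
  have "\<forall>X Y u. X \<in> Ob C \<longrightarrow> Y \<in> Ob C \<longrightarrow> u \<in> hom C X Y \<longrightarrow>
        (\<exists>Z v w. (X, Y, Z, u, v, w) \<in> Dist C)" using C unfolding triangulated_def by (elim conjE)
  thus ?thesis using XY u by blast
qed
lemma tr_rot: assumes C: "triangulated C" and d: "(X, Y, Z, u, v, w) \<in> Dist C"
  shows "(Y, Z, ShO C X, v, w, Ng C (ShA C u)) \<in> Dist C"
proof -
  have "\<forall>t\<in>Dist C. triangle C t" using C unfolding triangulated_def by (elim conjE)
  hence t: "triangle C (X,Y,Z,u,v,w)" using d by blast
  have "\<forall>X Y Z u v w. triangle C (X, Y, Z, u, v, w) \<longrightarrow>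
        ((X, Y, Z, u, v, w) \<in> Dist C \<longleftrightarrow> (Y, Z, ShO C X, v, w, Ng C (ShA C u)) \<in> Dist C)"
    using C unfolding triangulated_def by (elim conjE)
  thus ?thesis using t d by blast
qed
lemma tr_3: assumes C: "triangulated C" and d: "(X, Y, Z, u, v, w) \<in> Dist C" and d': "(X', Y', Z', u', v', w') \<in> Dist C"
    and a: "a \<in> hom C X X'" and b: "b \<in> hom C Y Y'" and e: "Cmp C b u = Cmp C u' a"
  shows "\<exists>c. c \<in> hom C Z Z' \<and> Cmp C c v = Cmp C v' b \<and> Cmp C (ShA C a) w = Cmp C w' c"
proof -
  have "\<forall>X Y Z u v w X' Y' Z' u' v' w' a b.
        (X, Y, Z, u, v, w) \<in> Dist C \<longrightarrow> (X', Y', Z', u', v', w') \<in> Dist C \<longrightarrow>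
        a \<in> hom C X X' \<longrightarrow> b \<in> hom C Y Y' \<longrightarrow> Cmp C b u = Cmp C u' a \<longrightarrow>
        (\<exists>c. tri_morphism C (X, Y, Z, u, v, w) (X', Y', Z', u', v', w') a b c)"
    using C unfolding triangulated_def by (elim conjE)
  then obtain c where "tri_morphism C (X, Y, Z, u, v, w) (X', Y', Z', u', v', w') a b c"
    using d d' a b e by blast
  thus ?thesis unfolding tri_morphism_def by auto
qed

lemma zobj_ob: "zero_object C Q \<Longrightarrow> Q \<in> Ob C" unfolding zero_object_def by blast

lemma dist_comp_zero:
  assumes C: "triangulated C" and d: "(X,Y,Z,u,v,w) \<in> Dist C"
  shows "Cmp C v u = Zr C X Z"
proof -
  have P: "preadditive C" using tr_pa[OF C] .
  have cat: "category C" using pa_cat[OF P] .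
  obtain Q where Q: "zero_object C Q" using tr_zobj[OF C] by blast
  have t: "X \<in> Ob C" "u \<in> hom C X Y" "Z \<in> Ob C" using tr_tri[OF C d] by auto
  have d0: "(X, X, Q, Idt C X, Zr C X Q, Zr C Q (ShO C X)) \<in> Dist C" using tr_triv[OF C t(1) Q] .
  obtain c where c: "c \<in> hom C Q Z" "Cmp C c (Zr C X Q) = Cmp C v u"
    using tr_3[OF C d0 d cat_id[OF cat t(1)] t(2) refl] cat_idr[OF cat t(2)] by auto
  show ?thesis using c comp_zero[OF P c(1) t(1)] by simp
qed

lemma dist_zero_split:
  assumes C: "triangulated C" and d: "(X,Y,Z,u,v,w) \<in> Dist C" and v0: "v = Zr C Y Z"
  shows "split_epi C u"
proof -
  have P: "preadditive C" using tr_pa[OF C] .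
  have cat: "category C" using pa_cat[OF P] .
  have S: "additive_functor C C (ShO C) (ShA C)" using tr_shift[OF C] .
  obtain Q where Q: "zero_object C Q" using tr_zobj[OF C] by blast
  have QO: "Q \<in> Ob C" using zobj_ob[OF Q] .
  have t: "X \<in> Ob C" "Y \<in> Ob C" "Z \<in> Ob C" "u \<in> hom C X Y" "v \<in> hom C Y Z" "w \<in> hom C Z (ShO C X)"
    using tr_tri[OF C d] by auto
  have d0: "(Y, Q, ShO C Y, Zr C Y Q, Zr C Q (ShO C Y), Ng C (ShA C (Idt C Y))) \<in> Dist C"
    using tr_rot[OF C tr_triv[OF C t(2) Q]] .
  have d1: "(Y, Z, ShO C X, v, w, Ng C (ShA C u)) \<in> Dist C" using tr_rot[OF C d] .
  have e: "Cmp C (Zr C Q Z) (Zr C Y Q) = Cmp C v (Idt C Y)"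
    using comp_zero[OF P pa_zero[OF P QO t(3)] t(2)] cat_idr[OF cat t(5)] v0 by simp
  obtain c where c: "c \<in> hom C (ShO C Y) (ShO C X)"
     "Cmp C (ShA C (Idt C Y)) (Ng C (ShA C (Idt C Y))) = Cmp C (Ng C (ShA C u)) c"
    using tr_3[OF C d0 d1 cat_id[OF cat t(2)] pa_zero[OF P QO t(3)] e] by blast
  have SY: "ShO C Y \<in> Ob C" using F_ob[OF S t(2)] .
  have iY: "ShA C (Idt C Y) = Idt C (ShO C Y)" using F_id[OF S t(2)] .
  have su: "ShA C u \<in> hom C (ShO C X) (ShO C Y)" using F_hom[OF S t(4)] .
  have "Ng C (Idt C (ShO C Y)) = Ng C (Cmp C (ShA C u) c)"
    using c(2) iY cat_idl[OF cat pa_neg[OF P cat_id[OF cat SY]]] neg_comp[OF P c(1) su] by simp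
  hence uc: "Cmp C (ShA C u) c = Idt C (ShO C Y)"
    using neg_inj[OF P cat_id[OF cat SY] cat_comp[OF cat c(1) su]] by simp
  obtain s where s: "s \<in> hom C Y X" "ShA C s = c"
    using tr_full[OF C] c(1) t(1,2) unfolding full_def by blast
  have "ShA C (Cmp C u s) = ShA C (Idt C Y)" using F_comp[OF S s(1) t(4)] s(2) uc iY by simp
  hence "Cmp C u s = Idt C Y" using tr_faith[OF C] t(2) cat_comp[OF cat s(1) t(4)] cat_id[OF cat t(2)]
    unfolding faithful_def by blast
  thus ?thesis unfolding split_epi_def using s(1) t(4) homD[OF t(4)] by auto
qed

theorem proposition3:
  fixes A :: "('o1, 'm1) tri_cat" and B :: "('o2, 'm2) tri_cat"
    and Fo :: "'o1 \<Rightarrow> 'o2" and Fa :: "'m1 \<Rightarrow> 'm2" and \<xi> :: "'o1 \<Rightarrow> 'm2"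
  assumes "triangulated A" and "triangulated B"
    and "triangle_functor A B Fo Fa \<xi>"
  shows "faithful A Fa \<longleftrightarrow>
    (\<forall>X\<in>Ob A. \<forall>Y\<in>Ob A. \<forall>v\<in>hom A X Y. split_epi B (Fa v) \<longrightarrow> split_epi A v)"
proof -
  note TA = assms(1) and TB = assms(2)
  have PA: "preadditive A" using tr_pa[OF TA] .
  have PB: "preadditive B" using tr_pa[OF TB] .
  have cA: "category A" using pa_cat[OF PA] .
  have cB: "category B" using pa_cat[OF PB] .
  have F: "additive_functor A B Fo Fa" using assms(3) unfolding triangle_functor_def by blast
  have Fd: "\<And>X Y Z u v w. (X, Y, Z, u, v, w) \<in> Dist A \<Longrightarrow>
        (Fo X, Fo Y, Fo Z, Fa u, Fa v, Cmp B (\<xi> X) (Fa w)) \<in> Dist B"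
    using assms(3) unfolding triangle_functor_def by blast
  have xi: "\<And>X. X \<in> Ob A \<Longrightarrow> \<xi> X \<in> hom B (Fo (ShO A X)) (ShO B (Fo X)) \<and> iso B (\<xi> X)"
    using assms(3) unfolding triangle_functor_def by blast
  have nat: "\<And>X Y f. f \<in> hom A X Y \<Longrightarrow>
        Cmp B (\<xi> Y) (Fa (ShA A f)) = Cmp B (ShA B (Fa f)) (\<xi> X)"
    using assms(3) unfolding triangle_functor_def by blast
  have SA: "additive_functor A A (ShO A) (ShA A)" using tr_shift[OF TA] .
  have SB: "additive_functor B B (ShO B) (ShA B)" using tr_shift[OF TB] .
  show ?thesis
  proof
    assume fa: "faithful A Fa"
    show "\<forall>X\<in>Ob A. \<forall>Y\<in>Ob A. \<forall>v\<in>hom A X Y. split_epi B (Fa v) \<longrightarrow> split_epi A v"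
    proof (intro ballI impI)
      fix X Y v assume X: "X \<in> Ob A" and Y: "Y \<in> Ob A" and v: "v \<in> hom A X Y"
        and sp: "split_epi B (Fa v)"
      obtain Z g h where d: "(X, Y, Z, v, g, h) \<in> Dist A" using tr_ext[OF TA v] by blast
      have t: "Z \<in> Ob A" "g \<in> hom A Y Z" using tr_tri[OF TA d] by auto
      have Fv: "Fa v \<in> hom B (Fo X) (Fo Y)" using F_hom[OF F v] .
      have Fg: "Fa g \<in> hom B (Fo Y) (Fo Z)" using F_hom[OF F t(2)] .
      have z: "Cmp B (Fa g) (Fa v) = Zr B (Fo X) (Fo Z)" using dist_comp_zero[OF TB Fd[OF d]] .
      obtain s where s: "s \<in> hom B (Fo Y) (Fo X)" "Cmp B (Fa v) s = Idt B (Fo Y)"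
        using sp homD[OF Fv] unfolding split_epi_def by auto
      have "Fa g = Cmp B (Fa g) (Cmp B (Fa v) s)" using s(2) cat_idr[OF cB Fg] by simp
      also have "\<dots> = Cmp B (Zr B (Fo X) (Fo Z)) s" using cat_assoc[OF cB s(1) Fv Fg] z by simp
      also have "\<dots> = Zr B (Fo Y) (Fo Z)" using zero_comp[OF PB s(1) F_ob[OF F t(1)]] .
      also have "\<dots> = Fa (Zr A Y Z)" using F_zero[OF PA PB F Y t(1)] by simp
      finally have "g = Zr A Y Z" using fa Y t pa_zero[OF PA Y t(1)] unfolding faithful_def by blast
      thus "split_epi A v" using dist_zero_split[OF TA d] by blast
    qed
  next
    assume H: "\<forall>X\<in>Ob A. \<forall>Y\<in>Ob A. \<forall>v\<in>hom A X Y. split_epi B (Fa v) \<longrightarrow> split_epi A v"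
    show "faithful A Fa"
    proof (rule faithful_of_zero[OF PA PB F])
      fix X Y f assume f: "f \<in> hom A X Y" and f0: "Fa f = Zr B (Fo X) (Fo Y)"
      have X: "X \<in> Ob A" and Y: "Y \<in> Ob A" using cat_obs[OF cA f] by auto
      obtain Z g h where d: "(X, Y, Z, f, g, h) \<in> Dist A" using tr_ext[OF TA f] by blast
      have d2: "(Z, ShO A X, ShO A Y, h, Ng A (ShA A f), Ng A (ShA A g)) \<in> Dist A"
        using tr_rot[OF TA tr_rot[OF TA d]] .
      have t: "Z \<in> Ob A" "h \<in> hom A Z (ShO A X)" using tr_tri[OF TA d] by auto
      have SX: "ShO A X \<in> Ob A" and SY: "ShO A Y \<in> Ob A" using F_ob[OF SA X] F_ob[OF SA Y] by auto
      have FX: "Fo X \<in> Ob B" and FY: "Fo Y \<in> Ob B" using F_ob[OF F X] F_ob[OF F Y] by auto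
      have sf: "ShA A f \<in> hom A (ShO A X) (ShO A Y)" using F_hom[OF SA f] .
      have fsf: "Fa (ShA A f) \<in> hom B (Fo (ShO A X)) (Fo (ShO A Y))" using F_hom[OF F sf] .
      obtain k where k: "k \<in> hom B (ShO B (Fo Y)) (Fo (ShO A Y))"
          "Cmp B k (\<xi> Y) = Idt B (Fo (ShO A Y))"
        using xi[OF Y] homD[of "\<xi> Y"] unfolding iso_def by metis
      have xX: "\<xi> X \<in> hom B (Fo (ShO A X)) (ShO B (Fo X))" using xi[OF X] by blast
      have xY: "\<xi> Y \<in> hom B (Fo (ShO A Y)) (ShO B (Fo Y))" using xi[OF Y] by blast
      have "Cmp B (\<xi> Y) (Fa (ShA A f)) = Cmp B (ShA B (Zr B (Fo X) (Fo Y))) (\<xi> X)"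
        using nat[OF f] f0 by simp
      also have "\<dots> = Cmp B (Zr B (ShO B (Fo X)) (ShO B (Fo Y))) (\<xi> X)"
        using F_zero[OF PB PB SB FX FY] by simp
      also have "\<dots> = Zr B (Fo (ShO A X)) (ShO B (Fo Y))"
        using zero_comp[OF PB xX F_ob[OF SB FY]] .
      finally have e1: "Cmp B (\<xi> Y) (Fa (ShA A f)) = Zr B (Fo (ShO A X)) (ShO B (Fo Y))" .
      have "Fa (ShA A f) = Cmp B (Cmp B k (\<xi> Y)) (Fa (ShA A f))" using k(2) cat_idl[OF cB fsf] by simp
      also have "\<dots> = Cmp B k (Zr B (Fo (ShO A X)) (ShO B (Fo Y)))"
        using cat_assoc[OF cB fsf xY k(1)] e1 by simp
      also have "\<dots> = Zr B (Fo (ShO A X)) (Fo (ShO A Y))"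
        using comp_zero[OF PB k(1) F_ob[OF F SX]] .
      finally have "Fa (ShA A f) = Zr B (Fo (ShO A X)) (Fo (ShO A Y))" .
      hence z2: "Fa (Ng A (ShA A f)) = Zr B (Fo (ShO A X)) (Fo (ShO A Y))"
        using F_neg[OF PA PB F sf] neg_zero[OF PB F_ob[OF F SX] F_ob[OF F SY]] by simp
      have "split_epi B (Fa h)" using dist_zero_split[OF TB Fd[OF d2] z2] .
      hence "split_epi A h" using H t SX by blast
      then obtain s where s: "s \<in> hom A (ShO A X) Z" "Cmp A h s = Idt A (ShO A X)"
        using homD[OF t(2)] unfolding split_epi_def by auto
      have nsf: "Ng A (ShA A f) \<in> hom A (ShO A X) (ShO A Y)" using pa_neg[OF PA sf] .
      have z3: "Cmp A (Ng A (ShA A f)) h = Zr A Z (ShO A Y)" using dist_comp_zero[OF TA d2] .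
      have "Ng A (ShA A f) = Cmp A (Ng A (ShA A f)) (Cmp A h s)" using s(2) cat_idr[OF cA nsf] by simp
      also have "\<dots> = Cmp A (Zr A Z (ShO A Y)) s" using cat_assoc[OF cA s(1) t(2) nsf] z3 by simp
      also have "\<dots> = Zr A (ShO A X) (ShO A Y)" using zero_comp[OF PA s(1) SY] .
      finally have "ShA A f = Zr A (ShO A X) (ShO A Y)"
        using neg_neg[OF PA sf] neg_zero[OF PA SX SY] by metis
      also have "\<dots> = ShA A (Zr A X Y)" using F_zero[OF PA PA SA X Y] by simp
      finally show "f = Zr A X Y" using tr_faith[OF TA] X Y f pa_zero[OF PA X Y]
        unfolding faithful_def by blast
    qed
  qed
qed

end
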